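(* Let $f$ be a harmonic function on $K$ whose restriction to the edge $[p_1,p_2]\cong[0,1]$ is strictly monotone. Then the derivative of this restriction at $t=\frac12$ exists in the extended sense and equals $+\infty$ if the restriction is increasing and $-\infty$ if it is decreasing.
   Context: Let $p_0,p_1,p_2$ be the vertices of a unit equilateral triangle in $\mathbb{R}^2$, $F_i(x)=(x+p_i)/2$, and $K$ the Sierpinski gasket (the attractor of $F_0,F_1,F_2$). Minimal triangles of the graph $G_m$ are the triangles with vertices $F_w(p_0),F_w(p_1),F_w(p_2)$ for words $w$ of length $m$. A continuous $f:K\to\mathbb{R}$ is harmonic if for every $m\ge0$ and every minimal triangle of $G_m$ with vertices $v_i,v_j,v_k$, the value at the midpoint $v_{ij}$ of $[v_i,v_j]$ is $\frac15(2f(v_i)+2f(v_j)+f(v_k))$. The edge $[p_1,p_2]$ is identified with $[0,1]$ via $t\mapsto p_1+t(p_2-p_1)$. *)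

theory Defs
  imports "HOL-Analysis.Analysis"
begin

text \<open>The plane R^2 is modelled by the complex numbers. The vertices are p 0, p 1, p 2.\<close>

definition sg_map :: "(nat \<Rightarrow> complex) \<Rightarrow> nat \<Rightarrow> complex \<Rightarrow> complex" where
  "sg_map p i x = (x + p i) / 2"

definition sg_word :: "(nat \<Rightarrow> complex) \<Rightarrow> nat list \<Rightarrow> complex \<Rightarrow> complex" where
  "sg_word p w x = foldr (sg_map p) w x"

definition sg_attractor :: "(nat \<Rightarrow> complex) \<Rightarrow> complex set" where
  "sg_attractor p = (THE K. compact K \<and> K \<noteq> {} \<and> K = (\<Union>i\<in>{0,1,2}. sg_map p i ` K))"

definition sg_harmonic :: "(nat \<Rightarrow> complex) \<Rightarrow> (complex \<Rightarrow> real) \<Rightarrow> bool" where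
  "sg_harmonic p f \<longleftrightarrow>
     continuous_on (sg_attractor p) f \<and>
     (\<forall>w. set w \<subseteq> {0,1,2} \<longrightarrow>
        (\<forall>i j k. {i,j,k} = {0,1,2::nat} \<longrightarrow>
           f ((sg_word p w (p i) + sg_word p w (p j)) / 2) =
             (2 * f (sg_word p w (p i)) + 2 * f (sg_word p w (p j)) + f (sg_word p w (p k))) / 5))"

definition sg_edge :: "(nat \<Rightarrow> complex) \<Rightarrow> (complex \<Rightarrow> real) \<Rightarrow> real \<Rightarrow> real" where
  "sg_edge p f t = f (p 1 + complex_of_real t * (p 2 - p 1))"

end

theory Submission imports Defs begin

lemma sgw_Cons: "sg_word p (i # w) x = sg_map p i (sg_word p w x)"
  by (simp add: sg_word_def)
lemma sgw_Nil: "sg_word p [] x = x" by (simp add: sg_word_def)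
lemma sgw_append: "sg_word p (w @ v) x = sg_word p w (sg_word p v x)"
  by (simp add: sg_word_def)

lemma sgw_mid: "(sg_word p w x + sg_word p w y) / 2 = sg_word p w ((x + y) / 2)"
proof (induction w)
  case Nil then show ?case by (simp add: sgw_Nil)
next
  case (Cons a w)
  have "(sg_word p (a # w) x + sg_word p (a # w) y) / 2
     = ((sg_word p w x + sg_word p w y) / 2 + p a) / 2"
    by (simp add: sgw_Cons sg_map_def field_simps)
  also have "... = sg_word p (a # w) ((x + y) / 2)"
    by (simp add: Cons.IH sgw_Cons sg_map_def)
  finally show ?case .
qed

lemma sgw_rep: "sg_word p (replicate n j) x = p j + (x - p j) / 2 ^ n"
proof (induction n)
  case 0 then show ?case by (simp add: sgw_Nil)
next
  case (Suc n)
  have "sg_word p (replicate (Suc n) j) x = (sg_word p (replicate n j) x + p j) / 2"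
    by (simp add: sgw_Cons sg_map_def)
  also have "... = p j + (x - p j) / 2 ^ Suc n"
    unfolding Suc.IH by (simp add: field_simps)
  finally show ?case .
qed

lemma harm_step:
  assumes h: "sg_harmonic p f" and w: "set w \<subseteq> {0,1,2}" and ijk: "{i,j,k} = {0,1,2::nat}"
  shows "f (sg_word p (w @ [j]) (p i)) =
    (2 * f (sg_word p w (p i)) + 2 * f (sg_word p w (p j)) + f (sg_word p w (p k))) / 5"
proof -
  have "sg_word p (w @ [j]) (p i) = (sg_word p w (p i) + sg_word p w (p j)) / 2"
    by (simp add: sgw_append sgw_mid sgw_Cons sgw_Nil sg_map_def add.commute)
  then show ?thesis using h w ijk unfolding sg_harmonic_def by metis
qed

lemma fix_j: "sg_word p (w @ replicate n j) (p j) = sg_word p w (p j)"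
  by (simp add: sgw_append sgw_rep)

lemma core_rec:
  assumes h: "sg_harmonic p f" and w: "set w \<subseteq> {0,1,2}" and ijk: "{i,j,k} = {0,1,2::nat}"
  shows "f (sg_word p (w @ replicate (Suc n) j) (p i)) =
    (2 * f (sg_word p (w @ replicate n j) (p i)) + 2 * f (sg_word p w (p j))
      + f (sg_word p (w @ replicate n j) (p k))) / 5"
proof -
  have "j \<in> {i,j,k}" by simp
  hence jj: "j \<in> {0,1,2}" unfolding ijk .
  have W: "set (w @ replicate n j) \<subseteq> {0,1,2}" using w jj by (simp add: set_replicate_conv_if)
  have eq: "w @ replicate (Suc n) j = (w @ replicate n j) @ [j]"
    by (simp add: replicate_append_same)
  show ?thesis unfolding eq using harm_step[OF h W ijk] by (simp only: fix_j)
qed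

lemma core:
  assumes h: "sg_harmonic p f" and w: "set w \<subseteq> {0,1,2}" and ijk: "{i,j,k} = {0,1,2::nat}"
  shows "f (sg_word p (w @ replicate n j) (p i)) - f (sg_word p w (p j)) =
           (((f (sg_word p w (p i)) - f (sg_word p w (p j))) + (f (sg_word p w (p k)) - f (sg_word p w (p j))))*(3/5)^n
           + ((f (sg_word p w (p i)) - f (sg_word p w (p j))) - (f (sg_word p w (p k)) - f (sg_word p w (p j))))*(1/5)^n)/2
       \<and> f (sg_word p (w @ replicate n j) (p k)) - f (sg_word p w (p j)) =
           (((f (sg_word p w (p i)) - f (sg_word p w (p j))) + (f (sg_word p w (p k)) - f (sg_word p w (p j))))*(3/5)^n
           - ((f (sg_word p w (p i)) - f (sg_word p w (p j))) - (f (sg_word p w (p k)) - f (sg_word p w (p j))))*(1/5)^n)/2"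
proof -
  define c where "c = f (sg_word p w (p j))"
  define A0 where "A0 = f (sg_word p w (p i)) - c"
  define B0 where "B0 = f (sg_word p w (p k)) - c"
  have "{k,j,i} = {i,j,k}" by blast
  hence kji: "{k,j,i} = {0,1,2::nat}" using ijk by simp
  have "f (sg_word p (w @ replicate n j) (p i)) - c = ((A0+B0)*(3/5)^n + (A0-B0)*(1/5)^n)/2
       \<and> f (sg_word p (w @ replicate n j) (p k)) - c = ((A0+B0)*(3/5)^n - (A0-B0)*(1/5)^n)/2"
  proof (induction n)
    case 0
    then show ?case by (simp add: A0_def B0_def)
  next
    case (Suc n)
    define X where "X = f (sg_word p (w @ replicate n j) (p i))"
    define Y where "Y = f (sg_word p (w @ replicate n j) (p k))"
    define U where "U = (3/5::real)^n"
    define V where "V = (1/5::real)^n"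
    have 1: "f (sg_word p (w @ replicate (Suc n) j) (p i)) = (2 * X + 2 * c + Y) / 5"
      using core_rec[OF h w ijk, of n] unfolding X_def Y_def c_def .
    have 2: "f (sg_word p (w @ replicate (Suc n) j) (p k)) = (2 * Y + 2 * c + X) / 5"
      using core_rec[OF h w kji, of n] unfolding X_def Y_def c_def .
    have IH: "X - c = ((A0+B0)*U + (A0-B0)*V)/2" "Y - c = ((A0+B0)*U - (A0-B0)*V)/2"
      using Suc.IH unfolding X_def Y_def U_def V_def by auto
    have P: "(3/5::real)^Suc n = 3/5 * U" "(1/5::real)^Suc n = 1/5 * V"
      unfolding U_def V_def by simp_all
    have X: "X = c + ((A0+B0)*U + (A0-B0)*V)/2" and Y: "Y = c + ((A0+B0)*U - (A0-B0)*V)/2"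
      using IH by linarith+
    show ?case unfolding 1 2 P X Y by (simp add: field_simps)
  qed
  then show ?thesis unfolding A0_def B0_def c_def .
qed

lemma bracket:
  fixes x :: real assumes "0 < x" "x < 1"
  shows "\<exists>n. 1/2^(Suc n) \<le> x \<and> x < 1/2^n"
proof -
  obtain k where k: "(1/2::real)^k < x" using real_arch_pow_inv[of x "1/2"] assms by auto
  let ?P = "\<lambda>n. 1/2^n \<le> x"
  have "?P k" using k by (simp add: power_divide)
  moreover have "\<not> ?P 0" using assms by simp
  ultimately obtain m where "\<not> ?P m" "?P (Suc m)" using ex_least_nat_less[of ?P k] by auto
  then show ?thesis by (intro exI[of _ m]) auto
qed

lemma growth:
  fixes D :: "nat \<Rightarrow> real"
  assumes D: "\<And>n. D n = (\<alpha>*(3/5)^n + \<beta>*(1/5)^n)/2" and a: "\<alpha> > 0"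
  shows "\<exists>N. \<forall>n\<ge>N. M \<le> 2^n * D n"
proof -
  obtain N where N: "(M + \<bar>\<beta>\<bar>/2) * 2 / \<alpha> < (6/5::real)^N"
    using real_arch_pow[of "6/5::real"] by auto
  show ?thesis
  proof (intro exI allI impI)
    fix n assume "N \<le> n"
    have "(6/5::real)^N \<le> (6/5)^n" using \<open>N \<le> n\<close> by (intro power_increasing) auto
    with N have "(M + \<bar>\<beta>\<bar>/2) * 2 / \<alpha> < (6/5)^n" by linarith
    hence "(M + \<bar>\<beta>\<bar>/2) * 2 < (6/5)^n * \<alpha>" using a by (simp only: pos_divide_less_eq)
    hence "(M + \<bar>\<beta>\<bar>/2) * 2 < \<alpha> * (6/5)^n" by (simp only: mult.commute)
    moreover have "\<bar>\<beta> * (2/5::real)^n\<bar> \<le> \<bar>\<beta>\<bar>"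
      by (simp add: abs_mult power_le_one mult_left_le)
    moreover have "2^n * D n = (\<alpha> * (6/5)^n + \<beta> * (2/5)^n) / 2"
      unfolding D by (simp add: field_simps flip: power_mult_distrib)
    moreover have "- (\<beta> * (2/5::real)^n) \<le> \<bar>\<beta> * (2/5::real)^n\<bar>" by (rule abs_ge_minus_self)
    ultimately have "(M + \<bar>\<beta>\<bar>/2) * 2 < \<alpha> * (6/5)^n" "- (\<beta> * (2/5::real)^n) \<le> \<bar>\<beta>\<bar>"
      "2^n * D n = (\<alpha> * (6/5)^n + \<beta> * (2/5)^n) / 2" by linarith+
    then show "M \<le> 2^n * D n" by argo
  qed
qed

lemma quot_bound:
  fixes D X x M :: real
  assumes "0 < D" "D \<le> X" "0 < x" "x < 1/2^n" "M \<le> 2^n * D"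
  shows "M \<le> X / x"
proof -
  have "x * 2^n < 1" using assms(4) by (simp add: field_simps)
  hence "2^n < 1/x" using assms(3) by (simp add: field_simps)
  hence "2^n * D \<le> (1/x) * D" using assms(1) by (intro mult_right_mono) auto
  also have "(1/x) * D = D / x" by simp
  also have "D / x \<le> X / x" using assms(2,3) by (simp add: divide_right_mono)
  finally show ?thesis using assms(5) by linarith
qed

lemma incr:
  assumes h: "sg_harmonic p f" and sm: "strict_mono_on {0..1} (sg_edge p f)"
  shows "filterlim (\<lambda>h. (sg_edge p f (1/2 + h) - sg_edge p f (1/2)) / h) at_top (at 0)"
proof -
  define g where "g = sg_edge p f"
  define a where "a = f (p 0)"
  define b where "b = f (p 1)"
  define c where "c = f (p 2)"
  have mono: "g x \<le> g y" if "0 \<le> x" "y \<le> 1" "x \<le> y" for x y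
    using mono_onD[OF strict_mono_on_imp_mono_on[OF sm], of x y] that g_def by auto
  have smono: "g x < g y" if "0 \<le> x" "y \<le> 1" "x < y" for x y
    using strict_mono_onD[OF sm, of x y] that g_def by auto
  have gb: "g 0 = b" and gc: "g 1 = c" by (simp_all add: g_def sg_edge_def b_def c_def)
  have bc: "b < c" using smono[of 0 1] gb gc by simp
  have s012: "{1,2,0} = {0,1,2::nat}" "{0,1,2} = {0,1,2::nat}" "{0,2,1} = {0,1,2::nat}" "{2,1,0} = {0,1,2::nat}"
    by auto
  have w0: "set ([]::nat list) \<subseteq> {0,1,2}" and w1: "set [1::nat] \<subseteq> {0,1,2}" and w2: "set [2::nat] \<subseteq> {0,1,2}" by simp_all
  have hm: "f (sg_word p [2] (p 1)) = (2*b+2*c+a)/5"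
    using harm_step[OF h w0 s012(1)] by (simp add: sgw_Nil a_def b_def c_def)
  have h10: "f (sg_word p [1] (p 0)) = (2*a+2*b+c)/5"
    using harm_step[OF h w0 s012(2)] by (simp add: sgw_Nil a_def b_def c_def)
  have h20: "f (sg_word p [2] (p 0)) = (2*a+2*c+b)/5"
    using harm_step[OF h w0 s012(3)] by (simp add: sgw_Nil a_def b_def c_def)
  have m: "sg_word p [2] (p 1) = p 1 + complex_of_real (1/2) * (p 2 - p 1)"
    by (simp add: sgw_Cons sgw_Nil sg_map_def field_simps)
  have m1: "sg_word p [1] (p 2) = sg_word p [2] (p 1)"
    by (simp add: sgw_Cons sgw_Nil sg_map_def field_simps)
  have p11: "sg_word p [1] (p 1) = p 1" and p22: "sg_word p [2] (p 2) = p 2"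
    by (simp_all add: sgw_Cons sgw_Nil sg_map_def)
  have gm: "g (1/2) = (2*b+2*c+a)/5" using hm m by (simp add: g_def sg_edge_def)
  have ptL: "sg_word p ([1] @ replicate n 2) (p 1) = p 1 + complex_of_real (1/2 - 1/2^Suc n) * (p 2 - p 1)" for n
    by (simp add: sgw_append sgw_rep sgw_Cons sgw_Nil sg_map_def field_simps)
  have ptR: "sg_word p ([2] @ replicate n 1) (p 2) = p 1 + complex_of_real (1/2 + 1/2^Suc n) * (p 2 - p 1)" for n
    by (simp add: sgw_append sgw_rep sgw_Cons sgw_Nil sg_map_def field_simps)
  define EL where "EL = b - (2*a+2*b+c)/5"
  define ER where "ER = c - (2*a+2*c+b)/5"
  have fm: "f (sg_word p [1] (p 2)) = g (1/2)" "f (sg_word p [2] (p 1)) = g (1/2)"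
    using m1 m by (simp_all only: g_def sg_edge_def)
  have DL: "g (1/2) - g (1/2 - 1/2^Suc n) = ((3*(c-b)/5)*(3/5)^n + (-EL)*(1/5)^n)/2" for n
  proof -
    have fL: "f (sg_word p ([1] @ replicate n 2) (p 1)) = g (1/2 - 1/2^Suc n)"
      by (simp only: ptL g_def sg_edge_def)
    have C: "g (1/2 - 1/2^Suc n) - g (1/2)
      = ((b - g (1/2) + (f (sg_word p [1] (p 0)) - g (1/2)))*(3/5)^n
         + (b - g (1/2) - (f (sg_word p [1] (p 0)) - g (1/2)))*(1/5)^n)/2"
      using core[OF h w1 s012(1), of n] unfolding fL fm p11 b_def[symmetric] by simp
    have k1: "b - g (1/2) + (f (sg_word p [1] (p 0)) - g (1/2)) = 3*(b-c)/5"
      unfolding gm h10 by (simp add: field_simps)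
    have k2: "b - g (1/2) - (f (sg_word p [1] (p 0)) - g (1/2)) = EL"
      unfolding h10 EL_def by simp
    have k3: "((3*(c-b)/5)*(3/5::real)^n + (-EL)*(1/5)^n)/2 = - (((3*(b-c)/5)*(3/5)^n + EL*(1/5)^n)/2)"
      by (simp add: field_simps)
    show ?thesis using C unfolding k1 k2 k3 by linarith
  qed
  have DR: "g (1/2 + 1/2^Suc n) - g (1/2) = ((3*(c-b)/5)*(3/5)^n + ER*(1/5)^n)/2" for n
  proof -
    have fR: "f (sg_word p ([2] @ replicate n 1) (p 2)) = g (1/2 + 1/2^Suc n)"
      by (simp only: ptR g_def sg_edge_def)
    have C: "g (1/2 + 1/2^Suc n) - g (1/2)
      = ((c - g (1/2) + (f (sg_word p [2] (p 0)) - g (1/2)))*(3/5)^n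
         + (c - g (1/2) - (f (sg_word p [2] (p 0)) - g (1/2)))*(1/5)^n)/2"
      using core[OF h w2 s012(4), of n] unfolding fR fm p22 c_def[symmetric] by simp
    have k1: "c - g (1/2) + (f (sg_word p [2] (p 0)) - g (1/2)) = 3*(c-b)/5"
      unfolding gm h20 by (simp add: field_simps)
    have k2: "c - g (1/2) - (f (sg_word p [2] (p 0)) - g (1/2)) = ER"
      unfolding h20 ER_def by simp
    show ?thesis using C unfolding k1 k2 .
  qed
  have pos: "3*(c-b)/5 > 0" using bc by simp
  show ?thesis
    unfolding g_def[symmetric] filterlim_at_top
  proof
    fix M
    obtain NL where NL: "\<forall>n\<ge>NL. M \<le> 2^n * (g (1/2) - g (1/2 - 1/2^Suc n))"
      using growth[where D="\<lambda>n. g (1/2) - g (1/2 - 1/2^Suc n)" and M=M, OF DL pos] by blast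
    obtain NR where NR: "\<forall>n\<ge>NR. M \<le> 2^n * (g (1/2 + 1/2^Suc n) - g (1/2))"
      using growth[where D="\<lambda>n. g (1/2 + 1/2^Suc n) - g (1/2)" and M=M, OF DR pos] by blast
    define N where "N = max NL NR"
    show "\<forall>\<^sub>F x in at 0. M \<le> (g (1/2 + x) - g (1/2)) / x"
      unfolding eventually_at
    proof (intro exI[of _ "1/2^Suc N"] conjI ballI impI)
      show "(0::real) < 1/2^Suc N" by simp
      fix x :: real assume "x \<in> UNIV" and hx: "x \<noteq> 0 \<and> dist x 0 < 1/2^Suc N"
      have ax: "0 < \<bar>x\<bar>" "\<bar>x\<bar> < 1/2^Suc N" using hx by auto
      have "(1::real)/2^Suc N \<le> 1/2" by (simp add: field_simps)
      hence ax2: "\<bar>x\<bar> < 1/2" using ax by linarith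
      have ax1: "\<bar>x\<bar> < 1" using ax2 by linarith
      obtain n where n: "1/2^Suc n \<le> \<bar>x\<bar>" "\<bar>x\<bar> < 1/2^n"
        using bracket[OF ax(1) ax1] by blast
      have nN: "N \<le> n"
      proof (rule ccontr)
        assume "\<not> N \<le> n"
        hence "Suc n \<le> Suc N" by simp
        hence "(2::real)^Suc n \<le> 2^Suc N" by (rule power_increasing) simp
        hence "(1::real)/2^Suc N \<le> 1/2^Suc n" by (rule divide_left_mono) simp_all
        thus False using n ax by linarith
      qed
      have NLn: "NL \<le> n" and NRn: "NR \<le> n" using nN unfolding N_def by simp_all
      have e: "(0::real) < 1/2^Suc n" "1/2^Suc n \<le> (1::real)/2" by (simp_all add: field_simps)
      show "M \<le> (g (1/2 + x) - g (1/2)) / x"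
      proof (cases "x > 0")
        case True
        have ab: "\<bar>x\<bar> = x" using True by simp
        have "g (1/2) < g (1/2 + 1/2^Suc n)" by (rule smono) (use e in linarith)+
        hence D0: "0 < g (1/2 + 1/2^Suc n) - g (1/2)" by linarith
        have "g (1/2 + 1/2^Suc n) \<le> g (1/2 + x)" by (rule mono) (use e n True ax2 ab in linarith)+
        hence D1: "g (1/2 + 1/2^Suc n) - g (1/2) \<le> g (1/2 + x) - g (1/2)" by linarith
        have MM: "M \<le> 2^n * (g (1/2 + 1/2^Suc n) - g (1/2))" using NR NRn by blast
        have xl: "x < 1/2^n" using n ab by simp
        show ?thesis by (rule quot_bound[OF D0 D1 True xl MM])
      next
        case False
        have "x \<noteq> 0" using hx by blast
        hence xn: "x < 0" using False by linarith
        have ab: "\<bar>x\<bar> = -x" using xn by simp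
        have "g (1/2 - 1/2^Suc n) < g (1/2)" by (rule smono) (use e in linarith)+
        hence D0: "0 < g (1/2) - g (1/2 - 1/2^Suc n)" by linarith
        have "g (1/2 + x) \<le> g (1/2 - 1/2^Suc n)" by (rule mono) (use e n xn ax2 ab in linarith)+
        hence D1: "g (1/2) - g (1/2 - 1/2^Suc n) \<le> g (1/2) - g (1/2 + x)" by linarith
        have MM: "M \<le> 2^n * (g (1/2) - g (1/2 - 1/2^Suc n))" using NL NLn by blast
        have xl: "-x < 1/2^n" using n ab by simp
        have xp: "0 < -x" using xn by simp
        have eqq: "(g (1/2 + x) - g (1/2)) / x = (g (1/2) - g (1/2 + x)) / (-x)"
          by (simp only: divide_minus_right minus_divide_left minus_diff_eq)
        show ?thesis unfolding eqq by (rule quot_bound[OF D0 D1 xp xl MM])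
      qed
    qed
  qed
qed

lemma harm_neg: "sg_harmonic p f \<Longrightarrow> sg_harmonic p (\<lambda>z. - f z)"
  unfolding sg_harmonic_def by (auto intro: continuous_on_minus simp: field_simps)

theorem lemma4:
  fixes p :: "nat \<Rightarrow> complex" and f :: "complex \<Rightarrow> real"
  assumes "dist (p 0) (p 1) = 1" and "dist (p 1) (p 2) = 1" and "dist (p 0) (p 2) = 1"
    and "sg_harmonic p f"
  shows "(strict_mono_on {0..1} (sg_edge p f) \<longrightarrow>
            filterlim (\<lambda>h. (sg_edge p f (1/2 + h) - sg_edge p f (1/2)) / h) at_top (at 0))
       \<and> ((\<forall>s\<in>{0..1}. \<forall>t\<in>{0..1}. s < t \<longrightarrow> sg_edge p f t < sg_edge p f s) \<longrightarrow>
            filterlim (\<lambda>h. (sg_edge p f (1/2 + h) - sg_edge p f (1/2)) / h) at_bot (at 0))"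
proof (intro conjI impI)
  assume "strict_mono_on {0..1} (sg_edge p f)"
  then show "filterlim (\<lambda>h. (sg_edge p f (1/2 + h) - sg_edge p f (1/2)) / h) at_top (at 0)"
    using incr[OF assms(4)] by blast
next
  assume dec: "\<forall>s\<in>{0..1}. \<forall>t\<in>{0..1}. s < t \<longrightarrow> sg_edge p f t < sg_edge p f s"
  have e: "sg_edge p (\<lambda>z. - f z) = (\<lambda>t. - sg_edge p f t)" by (simp add: sg_edge_def fun_eq_iff)
  have "strict_mono_on {0..1} (sg_edge p (\<lambda>z. - f z))"
    unfolding e using dec by (auto intro!: strict_mono_onI)
  from incr[OF harm_neg[OF assms(4)] this]
  have "filterlim (\<lambda>h. - ((sg_edge p f (1/2 + h) - sg_edge p f (1/2)) / h)) at_top (at 0)"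
    unfolding e by (simp add: minus_divide_left)
  then show "filterlim (\<lambda>h. (sg_edge p f (1/2 + h) - sg_edge p f (1/2)) / h) at_bot (at 0)"
    by (simp add: filterlim_uminus_at_bot)
qed

end
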